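(* Let $k$ be a field of characteristic $0$ and let $\mathcal L$ be a Lie torus of type $(\Delta,\Lambda)$ over $k$. Suppose $\alpha,\beta\in\Delta^\times$ satisfy $\langle\beta,\alpha^\vee\rangle<0$, and let $0\neq x_\alpha\in\mathcal L_\alpha$ and $0\neq y_\beta\in\mathcal L_\beta$. Then $\mathrm{ad}(x_\alpha)^{-\langle\beta,\alpha^\vee\rangle}\,y_\beta\neq 0$.
   Context: An irreducible finite root system in a finite-dimensional $k$-vector space $\mathcal X$ is a finite subset $\Delta\subset\mathcal X$ with $0\in\Delta$ such that $\Delta^\times:=\Delta\setminus\{0\}$ is an irreducible (possibly non-reduced) finite root system in $\mathcal X$ in the usual sense. Write $Q=\mathrm{span}_{\mathbb Z}(\Delta)$, $\alpha^\vee$ for the coroot of $\alpha\in\Delta^\times$, $\langle\beta,\alpha^\vee\rangle$ for the natural pairing, and $\Delta^\times_{\mathrm{ind}}=\Delta^\times\setminus 2\Delta^\times$. Let $\Lambda$ be a finitely generated free abelian group. A Lie torus of type $(\Delta,\Lambda)$ is a Lie algebra $\mathcal L$ over $k$ with a $Q\times\Lambda$-grading $\mathcal L=\bigoplus_{(\alpha,\lambda)\in Q\times\Lambda}\mathcal L_\alpha^\lambda$ (with $\mathcal L_\alpha:=\bigoplus_\lambda\mathcal L_\alpha^\lambda$ and $\mathcal L^\lambda:=\bigoplus_\alpha\mathcal L_\alpha^\lambda$) such that: (LT1) $\{\alpha\in Q:\mathcal L_\alpha\neq0\}=\Delta$; (LT2)(i) $\mathcal L_\alpha^0\neq 0$ for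 all $\alpha\in\Delta^\times_{\mathrm{ind}}$; (ii) whenever $\alpha\in\Delta^\times$, $\lambda\in\Lambda$ and $\mathcal L_\alpha^\lambda\neq0$, there exist $e\in\mathcal L_\alpha^\lambda$, $f\in\mathcal L_{-\alpha}^{-\lambda}$ with $\mathcal L_\alpha^\lambda=ke$, $\mathcal L_{-\alpha}^{-\lambda}=kf$ and $[[e,f],x]=\langle\beta,\alpha^\vee\rangle x$ for all $x\in\mathcal L_\beta$, $\beta\in Q$; (LT3) $\mathcal L$ is generated as an algebra by the spaces $\mathcal L_\alpha$, $\alpha\in\Delta^\times$; (LT4) $\Lambda$ is generated as a group by $\{\lambda\in\Lambda:\mathcal L^\lambda\neq0\}$. *)

theory Defs
  imports Complex_Main
begin

definition zsmul :: "int \<Rightarrow> 'a::ab_group_add \<Rightarrow> 'a" where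
  "zsmul m x = (if 0 \<le> m then (\<Sum>_\<in>{..<nat m}. x) else - (\<Sum>_\<in>{..<nat (- m)}. x))"

definition zspan :: "'a::ab_group_add set \<Rightarrow> 'a set" where
  "zspan S = {v. \<exists>c :: 'a \<Rightarrow> int. v = (\<Sum>a\<in>S. zsmul (c a) a)}"

definition subgroup_gen :: "'a::ab_group_add set \<Rightarrow> 'a set" where
  "subgroup_gen S = \<Inter>{G. 0 \<in> G \<and> (\<forall>x\<in>G. \<forall>y\<in>G. x + y \<in> G \<and> - x \<in> G) \<and> S \<subseteq> G}"

definition fg_free_abgroup :: "'l::ab_group_add itself \<Rightarrow> bool" where
  "fg_free_abgroup _ \<longleftrightarrow> (\<exists>(n::nat) (b :: nat \<Rightarrow> 'l). \<forall>l::'l.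
      \<exists>!c :: nat \<Rightarrow> int. (\<forall>i\<ge>n. c i = 0) \<and> l = (\<Sum>i<n. zsmul (c i) (b i)))"

definition coroot_cond :: "('k::field \<Rightarrow> 'x::ab_group_add \<Rightarrow> 'x) \<Rightarrow> 'x set \<Rightarrow> 'x \<Rightarrow> ('x \<Rightarrow> 'k) \<Rightarrow> bool" where
  "coroot_cond sX \<Phi> \<alpha> f \<longleftrightarrow> Vector_Spaces.linear sX (*) f \<and> f \<alpha> = 2
     \<and> (\<forall>\<beta>\<in>\<Phi>. \<beta> - sX (f \<beta>) \<alpha> \<in> \<Phi>) \<and> (\<forall>\<beta>\<in>\<Phi>. f \<beta> \<in> \<int>)"

text \<open>(Possibly non-reduced) finite root system in the vector space X (Bourbaki).\<close>
definition root_system :: "('k::field \<Rightarrow> 'x::ab_group_add \<Rightarrow> 'x) \<Rightarrow> 'x set \<Rightarrow> bool" where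
  "root_system sX \<Phi> \<longleftrightarrow> vector_space sX \<and> finite \<Phi> \<and> 0 \<notin> \<Phi> \<and> module.span sX \<Phi> = UNIV
     \<and> (\<forall>\<alpha>\<in>\<Phi>. \<exists>f. coroot_cond sX \<Phi> \<alpha> f)"

text \<open>The coroot (it is unique for a root system).\<close>
definition coroot :: "('k::field \<Rightarrow> 'x::ab_group_add \<Rightarrow> 'x) \<Rightarrow> 'x set \<Rightarrow> 'x \<Rightarrow> ('x \<Rightarrow> 'k)" where
  "coroot sX \<Phi> \<alpha> = (SOME f. coroot_cond sX \<Phi> \<alpha> f)"

definition irreducible_root_system :: "('k::field \<Rightarrow> 'x::ab_group_add \<Rightarrow> 'x) \<Rightarrow> 'x set \<Rightarrow> bool" where
  "irreducible_root_system sX \<Phi> \<longleftrightarrow> root_system sX \<Phi> \<and> \<Phi> \<noteq> {} \<and>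
     \<not> (\<exists>A B. A \<union> B = \<Phi> \<and> A \<inter> B = {} \<and> A \<noteq> {} \<and> B \<noteq> {} \<and>
          (\<forall>a\<in>A. \<forall>b\<in>B. coroot sX \<Phi> a b = 0))"

definition irr_root_system0 :: "('k::field \<Rightarrow> 'x::ab_group_add \<Rightarrow> 'x) \<Rightarrow> 'x set \<Rightarrow> bool" where
  "irr_root_system0 sX \<Delta> \<longleftrightarrow> 0 \<in> \<Delta> \<and> irreducible_root_system sX (\<Delta> - {0})"

definition nonzero_indivisible :: "('k::field \<Rightarrow> 'x::ab_group_add \<Rightarrow> 'x) \<Rightarrow> 'x set \<Rightarrow> 'x set" where
  "nonzero_indivisible sX \<Delta> = (\<Delta> - {0}) - (sX 2) ` (\<Delta> - {0})"

definition lie_algebra :: "('k::field \<Rightarrow> 'L::ab_group_add \<Rightarrow> 'L) \<Rightarrow> ('L \<Rightarrow> 'L \<Rightarrow> 'L) \<Rightarrow> bool" where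
  "lie_algebra sL br \<longleftrightarrow> vector_space sL
     \<and> (\<forall>x. Vector_Spaces.linear sL sL (br x)) \<and> (\<forall>y. Vector_Spaces.linear sL sL (\<lambda>x. br x y))
     \<and> (\<forall>x. br x x = 0)
     \<and> (\<forall>x y z. br x (br y z) + br y (br z x) + br z (br x y) = 0)"

definition lie_generated :: "('k::field \<Rightarrow> 'L::ab_group_add \<Rightarrow> 'L) \<Rightarrow> ('L \<Rightarrow> 'L \<Rightarrow> 'L) \<Rightarrow> 'L set \<Rightarrow> 'L set" where
  "lie_generated sL br S = \<Inter>{M. module.subspace sL M \<and> S \<subseteq> M \<and> (\<forall>x\<in>M. \<forall>y\<in>M. br x y \<in> M)}"

text \<open>Lg a l is the homogeneous component L_a^l.  A (Q x Lambda)-grading: the components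
  are subspaces, zero outside Q, L is their direct sum, and the bracket respects degrees.\<close>
definition lie_graded :: "('k::field \<Rightarrow> 'L::ab_group_add \<Rightarrow> 'L) \<Rightarrow> ('L \<Rightarrow> 'L \<Rightarrow> 'L) \<Rightarrow> 'x::ab_group_add set
     \<Rightarrow> ('x \<Rightarrow> 'l::ab_group_add \<Rightarrow> 'L set) \<Rightarrow> bool" where
  "lie_graded sL br Q Lg \<longleftrightarrow>
     (\<forall>a l. module.subspace sL (Lg a l))
   \<and> (\<forall>a l. a \<notin> Q \<longrightarrow> Lg a l = {0})
   \<and> (\<forall>x. \<exists>!c :: 'x \<Rightarrow> 'l \<Rightarrow> 'L. finite {p. c (fst p) (snd p) \<noteq> 0}
          \<and> (\<forall>a l. c a l \<in> Lg a l)
          \<and> x = (\<Sum>p\<in>{p. c (fst p) (snd p) \<noteq> 0}. c (fst p) (snd p)))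
   \<and> (\<forall>a l b m. \<forall>x\<in>Lg a l. \<forall>y\<in>Lg b m. br x y \<in> Lg (a + b) (l + m))"

definition Lroot :: "('k::field \<Rightarrow> 'L::ab_group_add \<Rightarrow> 'L) \<Rightarrow> ('x \<Rightarrow> 'l \<Rightarrow> 'L set) \<Rightarrow> 'x \<Rightarrow> 'L set" where
  "Lroot sL Lg a = module.span sL (\<Union>l. Lg a l)"

definition Ldeg :: "('k::field \<Rightarrow> 'L::ab_group_add \<Rightarrow> 'L) \<Rightarrow> ('x \<Rightarrow> 'l \<Rightarrow> 'L set) \<Rightarrow> 'l \<Rightarrow> 'L set" where
  "Ldeg sL Lg l = module.span sL (\<Union>a. Lg a l)"

definition lie_torus :: "('k::field_char_0 \<Rightarrow> 'x::ab_group_add \<Rightarrow> 'x) \<Rightarrow> ('k \<Rightarrow> 'L::ab_group_add \<Rightarrow> 'L)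
     \<Rightarrow> ('L \<Rightarrow> 'L \<Rightarrow> 'L) \<Rightarrow> 'x set \<Rightarrow> ('x \<Rightarrow> 'l::ab_group_add \<Rightarrow> 'L set) \<Rightarrow> bool" where
  "lie_torus sX sL br \<Delta> Lg \<longleftrightarrow>
     irr_root_system0 sX \<Delta> \<and> fg_free_abgroup TYPE('l) \<and> lie_algebra sL br
   \<and> lie_graded sL br (zspan \<Delta>) Lg
   \<comment> \<open>LT1\<close>
   \<and> {a \<in> zspan \<Delta>. Lroot sL Lg a \<noteq> {0}} = \<Delta>
   \<comment> \<open>LT2 (i)\<close>
   \<and> (\<forall>a\<in>nonzero_indivisible sX \<Delta>. Lg a 0 \<noteq> {0})
   \<comment> \<open>LT2 (ii)\<close>
   \<and> (\<forall>a\<in>\<Delta> - {0}. \<forall>l. Lg a l \<noteq> {0} \<longrightarrow>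
        (\<exists>e\<in>Lg a l. \<exists>f\<in>Lg (- a) (- l).
            Lg a l = range (\<lambda>c. sL c e) \<and> Lg (- a) (- l) = range (\<lambda>c. sL c f)
          \<and> (\<forall>b\<in>zspan \<Delta>. \<forall>x\<in>Lroot sL Lg b.
                br (br e f) x = sL (coroot sX (\<Delta> - {0}) a b) x)))
   \<comment> \<open>LT3\<close>
   \<and> lie_generated sL br (\<Union>a\<in>\<Delta> - {0}. Lroot sL Lg a) = UNIV
   \<comment> \<open>LT4\<close>
   \<and> subgroup_gen {l. Ldeg sL Lg l \<noteq> {0}} = UNIV"

end

theory Submission
  imports Defs
begin

lemma zsmul_succ: "zsmul (m + 1) x = zsmul m x + (x::'a::ab_group_add)"
proof (cases "0 \<le> m")
  case True
  hence "nat (m + 1) = Suc (nat m)" by simp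
  thus ?thesis using True by (simp add: zsmul_def)
next
  case False
  show ?thesis
  proof (cases "m = -1")
    case True thus ?thesis by (simp add: zsmul_def)
  next
    case F2: False
    hence "nat (- m) = Suc (nat (- (m + 1)))" using False by simp
    thus ?thesis using False F2 by (simp add: zsmul_def)
  qed
qed

lemma zsmul_zero[simp]: "zsmul 0 x = 0" by (simp add: zsmul_def)

lemma zsmul_add: "zsmul (a + b) x = zsmul a x + zsmul b (x::'a::ab_group_add)"
proof (induction b rule: int_induct[where k=0])
  case base thus ?case by simp
next
  case (step1 i)
  have "zsmul (a + (i + 1)) x = zsmul (a + i) x + x" using zsmul_succ[of "a + i" x] by (simp add: add.assoc)
  thus ?case using step1 zsmul_succ[of i x] by (simp add: add.assoc)
next
  case (step2 i)
  have e1: "zsmul (a + i) x = zsmul (a + i - 1) x + x" using zsmul_succ[of "a + i - 1" x] by simp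
  have e2: "zsmul i x = zsmul (i - 1) x + x" using zsmul_succ[of "i - 1" x] by simp
  have "a + (i - 1) = a + i - 1" by simp
  hence "zsmul (a + (i - 1)) x = zsmul (a + i - 1) x" by (rule arg_cong)
  also have "\<dots> = zsmul (a + i) x - x" using e1 by (simp add: eq_diff_eq)
  also have "\<dots> = zsmul a x + zsmul (i - 1) x" using step2 e2 by (simp add: algebra_simps)
  finally show ?case .
qed

definition lexlt :: "(nat \<Rightarrow> int) \<Rightarrow> (nat \<Rightarrow> int) \<Rightarrow> bool" where
  "lexlt u v \<longleftrightarrow> (\<exists>i. (\<forall>j<i. u j = v j) \<and> u i < v i)"

lemma lexlt_irrefl: "\<not> lexlt u u" by (auto simp: lexlt_def)

lemma lexlt_trans: "lexlt u v \<Longrightarrow> lexlt v w \<Longrightarrow> lexlt u w"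
proof -
  assume "lexlt u v" "lexlt v w"
  then obtain i k where i: "\<forall>j<i. u j = v j" "u i < v i" and k: "\<forall>j<k. v j = w j" "v k < w k"
    by (auto simp: lexlt_def)
  show "lexlt u w" unfolding lexlt_def
  proof (cases "i < k")
    case True thus "\<exists>i. (\<forall>j<i. u j = w j) \<and> u i < w i"
      using i k by (intro exI[of _ i]) auto
  next
    case False show "\<exists>i. (\<forall>j<i. u j = w j) \<and> u i < w i"
    proof (intro exI[of _ k] conjI)
      show "\<forall>j<k. u j = w j" using i k False by auto
      show "u k < w k"
      proof (cases "k = i")
        case True thus ?thesis using i k by auto
      next
        case F: False hence "k < i" using False by simp
        thus ?thesis using i k by auto
      qed
    qed
  qed
qed

lemma lexlt_total: "u \<noteq> v \<Longrightarrow> lexlt u v \<or> lexlt v u"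
proof -
  assume "u \<noteq> v"
  then obtain i where "u i \<noteq> v i" by auto
  hence "\<exists>i. u i \<noteq> v i" by blast
  then obtain m where m: "u m \<noteq> v m" "\<forall>j<m. u j = v j"
    using exists_least_iff[of "\<lambda>i. u i \<noteq> v i"] by blast
  show ?thesis
  proof (cases "u m < v m")
    case True thus ?thesis using m unfolding lexlt_def by blast
  next
    case False hence "v m < u m" using m by simp
    thus ?thesis using m unfolding lexlt_def by (metis)
  qed
qed

lemma lexlt_add: "lexlt u v \<Longrightarrow> lexlt (\<lambda>i. u i + t i) (\<lambda>i. v i + t i)" by (auto simp: lexlt_def)


locale LTc =
  fixes sX :: "'k::field_char_0 \<Rightarrow> 'x::ab_group_add \<Rightarrow> 'x"
    and sL :: "'k \<Rightarrow> 'L::ab_group_add \<Rightarrow> 'L"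
    and br :: "'L \<Rightarrow> 'L \<Rightarrow> 'L"
    and \<Delta> :: "'x set"
    and Lg :: "'x \<Rightarrow> 'l::ab_group_add \<Rightarrow> 'L set"
  assumes LT: "lie_torus sX sL br \<Delta> Lg"
begin

lemma lieA: "lie_algebra sL br" using LT unfolding lie_torus_def by (elim conjE)

sublocale L: vector_space sL using lieA unfolding lie_algebra_def by blast

lemma hom1: "module_hom sL sL (br x)"
  using lieA unfolding lie_algebra_def module_hom_iff_linear by blast
lemma hom2: "module_hom sL sL (\<lambda>x. br x y)"
  using lieA unfolding lie_algebra_def module_hom_iff_linear by blast

lemma br_add1: "br (x + y) z = br x z + br y z" using module_hom.add[OF hom2] .
lemma br_add2: "br z (x + y) = br z x + br z y" using module_hom.add[OF hom1] .
lemma br_sc1: "br (sL c x) z = sL c (br x z)" using module_hom.scale[OF hom2] .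
lemma br_sc2: "br z (sL c x) = sL c (br z x)" using module_hom.scale[OF hom1] .
lemma br_01[simp]: "br 0 z = 0" using module_hom.zero[OF hom2] .
lemma br_02[simp]: "br z 0 = 0" using module_hom.zero[OF hom1] .
lemma br_sum1: "br (sum g S) z = (\<Sum>a\<in>S. br (g a) z)" using module_hom.sum[OF hom2] .
lemma br_sum2: "br z (sum g S) = (\<Sum>a\<in>S. br z (g a))" using module_hom.sum[OF hom1] .
lemma br_diff2: "br z (x - y) = br z x - br z y" using module_hom.diff[OF hom1] .

lemma br_anti: "br x y = - br y x"
proof -
  have "br (x+y) (x+y) = 0" using lieA unfolding lie_algebra_def by blast
  moreover have "br x x = 0" "br y y = 0" using lieA unfolding lie_algebra_def by blast+
  ultimately have "br x y + br y x = 0" by (simp add: br_add1 br_add2 add.commute)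
  thus ?thesis by (simp add: eq_neg_iff_add_eq_0)
qed

lemma jacobi: "br x (br y z) = br (br x y) z + br y (br x z)"
proof -
  have "br x (br y z) + br y (br z x) + br z (br x y) = 0"
    using lieA unfolding lie_algebra_def by blast
  moreover have "br y (br z x) = - br y (br x z)" by (metis br_anti module_hom.neg[OF hom1])
  moreover have "br z (br x y) = - br (br x y) z" by (metis br_anti)
  ultimately show ?thesis by (simp add: algebra_simps)
qed

lemma grad: "lie_graded sL br (zspan \<Delta>) Lg" using LT unfolding lie_torus_def by (elim conjE)
lemma subsp: "L.subspace (Lg a l)" using grad unfolding lie_graded_def by blast
lemma outside: "a \<notin> zspan \<Delta> \<Longrightarrow> Lg a l = {0}" using grad unfolding lie_graded_def by blast
lemma br_grad: "x \<in> Lg a l \<Longrightarrow> y \<in> Lg b m \<Longrightarrow> br x y \<in> Lg (a + b) (l + m)"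
  using grad unfolding lie_graded_def by blast

definition "Pcmp x c \<longleftrightarrow> finite {p. c (fst p) (snd p) \<noteq> 0}
          \<and> (\<forall>a l. c a l \<in> Lg a l)
          \<and> x = (\<Sum>p\<in>{p. c (fst p) (snd p) \<noteq> 0}. c (fst p) (snd p))"

definition "cmp x = (THE c. Pcmp x c)"

lemma ex1: "\<exists>!c. Pcmp x c"
proof -
  have "\<forall>x. \<exists>!c :: 'x \<Rightarrow> 'l \<Rightarrow> 'L. finite {p. c (fst p) (snd p) \<noteq> 0}
          \<and> (\<forall>a l. c a l \<in> Lg a l)
          \<and> x = (\<Sum>p\<in>{p. c (fst p) (snd p) \<noteq> 0}. c (fst p) (snd p))"
    using grad unfolding lie_graded_def by (elim conjE)
  thus ?thesis unfolding Pcmp_def by (rule spec)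
qed

lemma cmp: "Pcmp x (cmp x)" unfolding cmp_def using ex1 by (rule theI')

lemma cmp_in: "cmp x a l \<in> Lg a l" using cmp unfolding Pcmp_def by blast
lemma cmp_fin: "finite {p. cmp x (fst p) (snd p) \<noteq> 0}" using cmp unfolding Pcmp_def by blast
lemma cmp_sum: "x = (\<Sum>p\<in>{p. cmp x (fst p) (snd p) \<noteq> 0}. cmp x (fst p) (snd p))"
  using cmp unfolding Pcmp_def by blast

lemma repr:
  assumes F: "finite F" and d: "\<And>p. p \<in> F \<Longrightarrow> d p \<in> Lg (fst p) (snd p)"
    and x: "x = (\<Sum>p\<in>F. d p)"
  shows "cmp x a l = (if (a,l) \<in> F then d (a,l) else 0)"
proof -
  define c where "c = (\<lambda>a l. if (a,l) \<in> F then d (a,l) else 0)"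
  have sub: "{p. c (fst p) (snd p) \<noteq> 0} \<subseteq> F" by (auto simp: c_def split: if_splits)
  have "Pcmp x c" unfolding Pcmp_def
  proof (intro conjI allI)
    show "finite {p. c (fst p) (snd p) \<noteq> 0}" using sub F finite_subset by blast
    fix a l show "c a l \<in> Lg a l" using d[of "(a,l)"] L.subspace_0[OF subsp] by (auto simp: c_def)
  next
    have "(\<Sum>p\<in>{p. c (fst p) (snd p) \<noteq> 0}. c (fst p) (snd p)) = (\<Sum>p\<in>F. c (fst p) (snd p))"
      by (rule sum.mono_neutral_left[OF F sub]) auto
    also have "\<dots> = (\<Sum>p\<in>F. d p)" by (rule sum.cong) (auto simp: c_def)
    finally show "x = (\<Sum>p\<in>{p. c (fst p) (snd p) \<noteq> 0}. c (fst p) (snd p))" using x by simp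
  qed
  hence "cmp x = c" unfolding cmp_def by (rule the1_equality[OF ex1])
  thus ?thesis by (simp add: c_def)
qed

lemma cmp_add: "cmp (x + y) a l = cmp x a l + cmp y a l"
proof -
  define F where "F = {p. cmp x (fst p) (snd p) \<noteq> 0} \<union> {p. cmp y (fst p) (snd p) \<noteq> 0}"
  have F: "finite F" using cmp_fin F_def by auto
  have "x = (\<Sum>p\<in>F. cmp x (fst p) (snd p))"
    by (subst cmp_sum[of x], rule sum.mono_neutral_left) (use F in \<open>auto simp: F_def\<close>)
  moreover have "y = (\<Sum>p\<in>F. cmp y (fst p) (snd p))"
    by (subst cmp_sum[of y], rule sum.mono_neutral_left) (use F in \<open>auto simp: F_def\<close>)
  ultimately have "x + y = (\<Sum>p\<in>F. cmp x (fst p) (snd p) + cmp y (fst p) (snd p))"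
    by (simp add: sum.distrib)
  from repr[OF F _ this, of a l]
  show ?thesis by (auto simp: F_def L.subspace_add[OF subsp] cmp_in)
qed

lemma cmp_scale: "cmp (sL s x) a l = sL s (cmp x a l)"
proof -
  define F where "F = {p. cmp x (fst p) (snd p) \<noteq> 0}"
  have F: "finite F" using cmp_fin F_def by auto
  have "sL s x = (\<Sum>p\<in>F. sL s (cmp x (fst p) (snd p)))"
    by (subst cmp_sum[of x]) (simp add: F_def L.scale_sum_right)
  from repr[OF F _ this, of a l]
  show ?thesis by (auto simp: F_def L.subspace_scale[OF subsp] cmp_in)
qed

lemma cmp_zero[simp]: "cmp 0 a l = 0"
  using repr[of "{}" _ 0 a l] by simp

lemma cmp_single: "z \<in> Lg b m \<Longrightarrow> cmp z a l = (if a = b \<and> l = m then z else 0)"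
  using repr[of "{(b,m)}" "\<lambda>_. z" z a l] by auto

lemma Lroot_char: "Lroot sL Lg \<alpha> = {x. \<forall>a l. a \<noteq> \<alpha> \<longrightarrow> cmp x a l = 0}"
proof
  show "Lroot sL Lg \<alpha> \<subseteq> {x. \<forall>a l. a \<noteq> \<alpha> \<longrightarrow> cmp x a l = 0}"
    unfolding Lroot_def
  proof (rule L.span_minimal)
    show "(\<Union>l. Lg \<alpha> l) \<subseteq> {x. \<forall>a l. a \<noteq> \<alpha> \<longrightarrow> cmp x a l = 0}"
      using cmp_single by auto
    show "L.subspace {x. \<forall>a l. a \<noteq> \<alpha> \<longrightarrow> cmp x a l = 0}"
      by (rule L.subspaceI) (auto simp: cmp_add cmp_scale)
  qed
  show "{x. \<forall>a l. a \<noteq> \<alpha> \<longrightarrow> cmp x a l = 0} \<subseteq> Lroot sL Lg \<alpha>"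
  proof
    fix x assume x: "x \<in> {x. \<forall>a l. a \<noteq> \<alpha> \<longrightarrow> cmp x a l = 0}"
    show "x \<in> Lroot sL Lg \<alpha>" unfolding Lroot_def
      apply (subst cmp_sum[of x])
      apply (rule L.span_sum)
      using x cmp_in by (metis (mono_tags, lifting) L.span_base UN_I UNIV_I mem_Collect_eq prod.collapse)
  qed
qed

lemma Lroot_sum:
  assumes x: "x \<in> Lroot sL Lg \<alpha>" and S: "finite S" and sub: "{l. cmp x \<alpha> l \<noteq> 0} \<subseteq> S"
  shows "x = (\<Sum>l\<in>S. cmp x \<alpha> l)"
proof -
  have z: "a \<noteq> \<alpha> \<Longrightarrow> cmp x a l = 0" for a l using x Lroot_char by auto
  have "x = (\<Sum>p\<in>{p. cmp x (fst p) (snd p) \<noteq> 0}. cmp x (fst p) (snd p))" by (rule cmp_sum)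
  also have "\<dots> = (\<Sum>p\<in>{\<alpha>} \<times> S. cmp x (fst p) (snd p))"
  proof (rule sum.mono_neutral_left)
    show "finite ({\<alpha>} \<times> S)" using S by auto
    show "{p. cmp x (fst p) (snd p) \<noteq> 0} \<subseteq> {\<alpha>} \<times> S" using sub z by fastforce
  qed auto
  also have "{\<alpha>} \<times> S = Pair \<alpha> ` S" by auto
  also have "(\<Sum>p\<in>Pair \<alpha> ` S. cmp x (fst p) (snd p)) = (\<Sum>l\<in>S. cmp x \<alpha> l)"
    by (simp add: sum.reindex inj_on_def)
  finally show ?thesis .
qed

lemma supp_fin: "finite {l. cmp x \<alpha> l \<noteq> 0}"
proof -
  have "{l. cmp x \<alpha> l \<noteq> 0} \<subseteq> snd ` {p. cmp x (fst p) (snd p) \<noteq> 0}"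
  proof
    fix l assume "l \<in> {l. cmp x \<alpha> l \<noteq> 0}"
    thus "l \<in> snd ` {p. cmp x (fst p) (snd p) \<noteq> 0}" by (intro image_eqI[of l snd "(\<alpha>,l)"]) auto
  qed
  thus ?thesis using cmp_fin finite_subset by blast
qed

lemma Lg_Lroot: "z \<in> Lg a l \<Longrightarrow> z \<in> Lroot sL Lg a"
  unfolding Lroot_def by (meson L.span_base UN_I UNIV_I)

lemma brL: assumes "x \<in> Lroot sL Lg a" "z \<in> Lroot sL Lg b" shows "br x z \<in> Lroot sL Lg (a + b)"
proof -
  have "\<And>x. x \<in> Lg a l \<Longrightarrow> z \<in> Lroot sL Lg b \<Longrightarrow> br x z \<in> Lroot sL Lg (a + b)" for l
  proof -
    fix x assume x: "x \<in> Lg a l" and zz: "z \<in> Lroot sL Lg b"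
    from zz show "br x z \<in> Lroot sL Lg (a + b)" unfolding Lroot_def
    proof (induction rule: L.span_induct_alt)
      case base thus ?case by (simp add: L.span_zero)
    next
      case (step c y w)
      then obtain m where "y \<in> Lg b m" by blast
      hence "br x y \<in> Lg (a+b) (l+m)" using br_grad x by blast
      hence "br x y \<in> L.span (\<Union>l. Lg (a + b) l)" by (meson L.span_base UN_I UNIV_I)
      thus ?case using step by (simp add: br_add2 br_sc2 L.span_add L.span_scale)
    qed
  qed
  with assms show ?thesis unfolding Lroot_def[of sL Lg a]
  proof (induction rule: L.span_induct_alt)
    case base thus ?case by (simp add: Lroot_def L.span_zero)
  next
    case (step c y w)
    thus ?case by (auto simp: br_add1 br_sc1 Lroot_def intro!: L.span_add L.span_scale)
  qed
qed

lemma fgf: "fg_free_abgroup TYPE('l)" using LT unfolding lie_torus_def by (elim conjE)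

lemma coord_ex: "\<exists>co::'l \<Rightarrow> nat \<Rightarrow> int. inj co \<and> (\<forall>l l'. co (l + l') = (\<lambda>i. co l i + co l' i))"
proof -
  obtain n and b :: "nat \<Rightarrow> 'l" where nb: "\<forall>l::'l.
      \<exists>!c :: nat \<Rightarrow> int. (\<forall>i\<ge>n. c i = 0) \<and> l = (\<Sum>i<n. zsmul (c i) (b i))"
    using fgf unfolding fg_free_abgroup_def by blast
  define P where "P l c \<longleftrightarrow> (\<forall>i\<ge>n. c i = 0) \<and> l = (\<Sum>i<n. zsmul (c i) (b i))" for l c
  have ex: "\<exists>!c. P l c" for l using nb unfolding P_def by blast
  define co where "co l = (THE c. P l c)" for l
  have Pc: "P l (co l)" for l unfolding co_def using ex by (rule theI')
  have "inj co"
  proof (rule injI)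
    fix l l' assume "co l = co l'"
    thus "l = l'" using Pc[of l] Pc[of l'] unfolding P_def by simp
  qed
  moreover have "co (l + l') = (\<lambda>i. co l i + co l' i)" for l l'
  proof -
    have "P (l + l') (\<lambda>i. co l i + co l' i)" unfolding P_def
    proof
      show "\<forall>i\<ge>n. co l i + co l' i = 0" using Pc[of l] Pc[of l'] unfolding P_def by simp
      have "l + l' = (\<Sum>i<n. zsmul (co l i) (b i)) + (\<Sum>i<n. zsmul (co l' i) (b i))"
        using Pc[of l] Pc[of l'] unfolding P_def by simp
      also have "\<dots> = (\<Sum>i<n. zsmul (co l i + co l' i) (b i))"
        by (simp add: sum.distrib zsmul_add)
      finally show "l + l' = (\<Sum>i<n. zsmul (co l i + co l' i) (b i))" .
    qed
    thus ?thesis unfolding co_def by (rule the1_equality[OF ex])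
  qed
  ultimately show ?thesis by blast
qed

definition "co = (SOME co::'l \<Rightarrow> nat \<Rightarrow> int. inj co \<and> (\<forall>l l'. co (l + l') = (\<lambda>i. co l i + co l' i)))"

lemma co: "inj co \<and> (\<forall>l l'. co (l + l') = (\<lambda>i. co l i + co l' i))"
  unfolding co_def using coord_ex by (rule someI_ex)

definition "lt l l' \<longleftrightarrow> lexlt (co l) (co l')"

lemma lt_irrefl: "\<not> lt l l" unfolding lt_def by (rule lexlt_irrefl)
lemma lt_trans: "lt a b \<Longrightarrow> lt b c \<Longrightarrow> lt a c" unfolding lt_def by (rule lexlt_trans)
lemma lt_total: "a \<noteq> b \<Longrightarrow> lt a b \<or> lt b a"
  unfolding lt_def using co lexlt_total by (metis injD)
lemma lt_addR: "lt a b \<Longrightarrow> lt (a + t) (b + t)"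
  unfolding lt_def using co lexlt_add by metis
lemma lt_addL: "lt a b \<Longrightarrow> lt (t + a) (t + b)"
  using lt_addR by (simp add: add.commute)

lemma le_mono: assumes ab: "lt a b \<or> a = b" and cd: "lt c d \<or> c = d"
  shows "(lt (a + c) (b + d) \<or> a + c = b + d) \<and> (a + c = b + d \<longrightarrow> a = b \<and> c = d)"
proof (cases "a = b")
  case True
  thus ?thesis using cd lt_addL[of c d a] by auto
next
  case False
  hence ab': "lt a b" using ab by simp
  have "lt (a + c) (b + c)" using lt_addR[OF ab'] .
  moreover have "lt (b + c) (b + d) \<or> c = d" using cd lt_addL by blast
  ultimately have "lt (a + c) (b + d)" using lt_trans by blast
  thus ?thesis using lt_irrefl by metis
qed

lemma fin_max: "finite S \<Longrightarrow> S \<noteq> {} \<Longrightarrow> \<exists>m\<in>S. \<forall>s\<in>S. \<not> lt m s"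
proof (induction S rule: finite_ne_induct)
  case (singleton x) thus ?case using lt_irrefl by auto
next
  case (insert a F)
  then obtain m where m: "m \<in> F" "\<forall>s\<in>F. \<not> lt m s" by blast
  show ?case
  proof (cases "lt m a")
    case True
    have "\<forall>s\<in>insert a F. \<not> lt a s" using m True lt_trans lt_irrefl by blast
    thus ?thesis by blast
  next
    case False thus ?thesis using m by blast
  qed
qed

lemma irr: "irr_root_system0 sX \<Delta>" using LT unfolding lie_torus_def by (elim conjE)
lemma rs: "root_system sX (\<Delta> - {0})" using irr unfolding irr_root_system0_def irreducible_root_system_def by blast
lemma fin\<Delta>: "finite \<Delta>"
proof -
  have "finite (\<Delta> - {0})" using rs unfolding root_system_def by blast
  hence "finite ((\<Delta> - {0}) \<union> {0})" by simp
  thus ?thesis by (rule finite_subset[rotated]) auto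
qed

lemma cor_cond: "\<alpha> \<in> \<Delta> - {0} \<Longrightarrow> coroot_cond sX (\<Delta> - {0}) \<alpha> (coroot sX (\<Delta> - {0}) \<alpha>)"
  unfolding coroot_def using rs unfolding root_system_def by (metis someI_ex)

lemma cor_hom: "\<alpha> \<in> \<Delta> - {0} \<Longrightarrow> module_hom sX (*) (coroot sX (\<Delta> - {0}) \<alpha>)"
  using cor_cond unfolding coroot_cond_def module_hom_iff_linear by blast

lemma cor_2: "\<alpha> \<in> \<Delta> - {0} \<Longrightarrow> coroot sX (\<Delta> - {0}) \<alpha> \<alpha> = 2"
  using cor_cond unfolding coroot_cond_def by blast

lemma Lroot_out: "a \<notin> zspan \<Delta> \<Longrightarrow> Lroot sL Lg a = {0}"
proof -
  assume a: "a \<notin> zspan \<Delta>"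
  have "Lroot sL Lg a \<subseteq> {0}" unfolding Lroot_def
    by (rule L.span_minimal) (use outside[OF a] in auto)
  thus ?thesis using L.span_zero unfolding Lroot_def by auto
qed

lemma Lroot_nz: "x \<in> Lroot sL Lg a \<Longrightarrow> x \<noteq> 0 \<Longrightarrow> a \<in> \<Delta>"
proof -
  assume x: "x \<in> Lroot sL Lg a" "x \<noteq> 0"
  hence nz: "Lroot sL Lg a \<noteq> {0}" by auto
  hence "a \<in> zspan \<Delta>" using Lroot_out by blast
  moreover have "{a \<in> zspan \<Delta>. Lroot sL Lg a \<noteq> {0}} = \<Delta>" using LT unfolding lie_torus_def by (elim conjE)
  ultimately show ?thesis using nz by blast
qed

lemma LT2all: "\<forall>a\<in>\<Delta> - {0}. \<forall>l. Lg a l \<noteq> {0} \<longrightarrow>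
        (\<exists>e\<in>Lg a l. \<exists>f\<in>Lg (- a) (- l).
            Lg a l = range (\<lambda>c. sL c e) \<and> Lg (- a) (- l) = range (\<lambda>c. sL c f)
          \<and> (\<forall>b\<in>zspan \<Delta>. \<forall>x\<in>Lroot sL Lg b.
                br (br e f) x = sL (coroot sX (\<Delta> - {0}) a b) x))"
  using LT unfolding lie_torus_def by (elim conjE)

context
  fixes \<alpha> e f lam
  assumes \<alpha>: "\<alpha> \<in> \<Delta> - {0}" and e: "e \<in> Lg \<alpha> lam" and f: "f \<in> Lg (- \<alpha>) (- lam)"
    and hz: "\<forall>b\<in>zspan \<Delta>. \<forall>x\<in>Lroot sL Lg b. br (br e f) x = sL (coroot sX (\<Delta> - {0}) \<alpha> b) x"
begin

abbreviation "c \<equiv> coroot sX (\<Delta> - {0}) \<alpha>"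

lemma hact: "x \<in> Lroot sL Lg b \<Longrightarrow> br (br e f) x = sL (c b) x"
proof (cases "b \<in> zspan \<Delta>")
  case True thus "x \<in> Lroot sL Lg b \<Longrightarrow> ?thesis" using hz by blast
next
  case False thus "x \<in> Lroot sL Lg b \<Longrightarrow> ?thesis" using Lroot_out by auto
qed

lemma c_add: "c (a + b) = c a + c b" using module_hom.add[OF cor_hom[OF \<alpha>]] .
lemma c_neg: "c (- a) = - c a" using module_hom.neg[OF cor_hom[OF \<alpha>]] .
lemma c_diff: "c (a - b) = c a - c b" using module_hom.diff[OF cor_hom[OF \<alpha>]] .
lemma c\<alpha>: "c \<alpha> = 2" using cor_2[OF \<alpha>] .

lemma eL: "e \<in> Lroot sL Lg \<alpha>" using Lg_Lroot[OF e] .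
lemma fL: "f \<in> Lroot sL Lg (- \<alpha>)" using Lg_Lroot[OF f] .

lemma e_wt: "v \<in> Lroot sL Lg \<gamma> \<Longrightarrow> \<exists>\<gamma>'. (br e ^^ j) v \<in> Lroot sL Lg \<gamma>' \<and> c \<gamma>' = c \<gamma> + 2 * of_nat j"
proof (induction j)
  case 0 thus ?case by auto
next
  case (Suc j)
  then obtain g where g: "(br e ^^ j) v \<in> Lroot sL Lg g" "c g = c \<gamma> + 2 * of_nat j" by blast
  have "(br e ^^ Suc j) v \<in> Lroot sL Lg (\<alpha> + g)" using brL[OF eL g(1)] by simp
  moreover have "c (\<alpha> + g) = c \<gamma> + 2 * of_nat (Suc j)" using g(2) by (simp add: c_add c\<alpha> algebra_simps)
  ultimately show ?case by blast
qed

lemma f_wt: "v \<in> Lroot sL Lg \<gamma> \<Longrightarrow> \<exists>\<gamma>'. (br f ^^ j) v \<in> Lroot sL Lg \<gamma>' \<and> c \<gamma>' = c \<gamma> - 2 * of_nat j"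
proof (induction j)
  case 0 thus ?case by auto
next
  case (Suc j)
  then obtain g where g: "(br f ^^ j) v \<in> Lroot sL Lg g" "c g = c \<gamma> - 2 * of_nat j" by blast
  have "(br f ^^ Suc j) v \<in> Lroot sL Lg (- \<alpha> + g)" using brL[OF fL g(1)] by simp
  moreover have "c (- \<alpha> + g) = c \<gamma> - 2 * of_nat (Suc j)" using g(2) by (simp add: c_add c_neg c_diff c\<alpha> algebra_simps)
  ultimately show ?case by blast
qed

lemma e_act: "v \<in> Lroot sL Lg \<gamma> \<Longrightarrow> br (br e f) ((br e ^^ j) v) = sL (c \<gamma> + 2 * of_nat j) ((br e ^^ j) v)"
  using e_wt[of v \<gamma> j] hact by metis

lemma K: assumes v: "v \<in> Lroot sL Lg \<gamma>"
  shows "(br e ^^ Suc k) (br f v) = br f ((br e ^^ Suc k) v) + sL (of_nat (Suc k) * (c \<gamma> + of_nat k)) ((br e ^^ k) v)"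
proof (induction k)
  case 0
  have "br e (br f v) = br (br e f) v + br f (br e v)" by (rule jacobi)
  also have "br (br e f) v = sL (c \<gamma>) v" using hact[OF v] .
  finally show ?case by (simp add: add.commute)
next
  case (Suc k)
  let ?W = "(br e ^^ Suc k) v" and ?U = "(br e ^^ k) v"
  let ?s1 = "of_nat (Suc k) * (c \<gamma> + of_nat k) :: 'k"
  let ?s2 = "c \<gamma> + 2 * of_nat (Suc k) :: 'k"
  let ?s3 = "of_nat (Suc (Suc k)) * (c \<gamma> + of_nat (Suc k)) :: 'k"
  have eq1: "(br e ^^ Suc (Suc k)) (br f v) = br e (br f ?W) + sL ?s1 ?W"
    using Suc by (simp add: br_add2 br_sc2)
  have eq2: "br e (br f ?W) = sL ?s2 ?W + br f (br e ?W)"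
    using jacobi[of e f ?W] e_act[OF v, of "Suc k"] by simp
  have s: "?s2 + ?s1 = ?s3" by (simp add: algebra_simps)
  have eq3: "sL ?s2 ?W + sL ?s1 ?W = sL ?s3 ?W"
    by (simp only: L.scale_left_distrib[symmetric] s)
  have "(br e ^^ Suc (Suc k)) (br f v) = br f (br e ?W) + (sL ?s2 ?W + sL ?s1 ?W)"
    unfolding eq1 eq2 by (simp only: add_ac)
  also have "\<dots> = br f ((br e ^^ Suc (Suc k)) v) + sL ?s3 ((br e ^^ Suc k) v)"
    unfolding eq3 by simp
  finally show ?case .
qed

lemma Cl: "\<forall>k v \<gamma> p. v \<in> Lroot sL Lg \<gamma> \<longrightarrow> c \<gamma> = of_int p \<longrightarrow> v \<noteq> 0 \<longrightarrow> (br f ^^ N) v = 0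
   \<longrightarrow> (br e ^^ k) v = 0 \<longrightarrow> 1 - int k \<le> p"
proof (induction N)
  case 0 thus ?case by simp
next
  case (Suc N)
  note IHN = Suc.IH
  show ?case
  proof (intro allI impI)
    fix k v \<gamma> p
    assume v: "v \<in> Lroot sL Lg \<gamma>" and cp: "c \<gamma> = of_int p" and nz: "v \<noteq> 0"
      and fN: "(br f ^^ Suc N) v = 0" and ek: "(br e ^^ k) v = 0"
    show "1 - int k \<le> p" using ek
    proof (induction k)
      case 0 thus ?case using nz by simp
    next
      case (Suc k)
      show ?case
      proof (rule ccontr)
        assume neg: "\<not> 1 - int (Suc k) \<le> p"
        define w where "w = br f v"
        have w: "w \<in> Lroot sL Lg (- \<alpha> + \<gamma>)" using brL[OF fL v] w_def by simp
        have cw: "c (- \<alpha> + \<gamma>) = of_int (p - 2)" by (simp add: c_add c_neg c_diff c\<alpha> cp)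
        have fNw: "(br f ^^ N) w = 0" using fN by (simp add: w_def funpow_Suc_right del: funpow.simps)
        have ev2: "(br e ^^ Suc (Suc k)) v = 0" using Suc.prems by simp
        have e2: "(br e ^^ Suc (Suc k)) w = 0"
          by (simp only: w_def K[OF v] ev2 Suc.prems L.scale_zero_right br_02 add_0)
        show False
        proof (cases "w = 0")
          case False
          have "1 - int (Suc (Suc k)) \<le> p - 2" using IHN[rule_format, OF w cw False fNw e2] .
          thus False using neg by simp
        next
          case True
          have "(br e ^^ Suc k) w = 0" using True by (induction k) auto
          hence "sL (of_nat (Suc k) * (c \<gamma> + of_nat k)) ((br e ^^ k) v) = 0"
            by (simp only: w_def K[OF v] Suc.prems br_02 add_0)
          moreover have sz: "(of_nat (Suc k) * (c \<gamma> + of_nat k) :: 'k) \<noteq> 0"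
          proof -
            have "(of_nat (Suc k) * (c \<gamma> + of_nat k) :: 'k) = of_int (int (Suc k) * (p + int k))"
              by (simp add: cp)
            moreover have "int (Suc k) * (p + int k) \<noteq> 0" using neg by simp
            ultimately show ?thesis by (metis of_int_eq_0_iff)
          qed
          ultimately have "(br e ^^ k) v = 0" using L.scale_eq_0_iff by blast
          hence "1 - int k \<le> p" by (rule Suc.IH)
          thus False using neg by simp
        qed
      qed
    qed
  qed
qed


lemma f_nil: assumes v: "v \<in> Lroot sL Lg \<gamma>" shows "\<exists>N. (br f ^^ N) v = 0"
proof (rule ccontr)
  assume "\<not> (\<exists>N. (br f ^^ N) v = 0)"
  hence nz: "(br f ^^ N) v \<noteq> 0" for N by blast
  have "\<forall>j. \<exists>g. (br f ^^ j) v \<in> Lroot sL Lg g \<and> c g = c \<gamma> - 2 * of_nat j"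
    using f_wt[OF v] by blast
  from choice[OF this] obtain g where g: "\<forall>j. (br f ^^ j) v \<in> Lroot sL Lg (g j) \<and> c (g j) = c \<gamma> - 2 * of_nat j"
    by blast
  have inD: "range g \<subseteq> \<Delta>"
  proof
    fix x assume "x \<in> range g"
    then obtain j where xj: "x = g j" by blast
    have "(br f ^^ j) v \<in> Lroot sL Lg (g j)" using g by blast
    from Lroot_nz[OF this nz] show "x \<in> \<Delta>" using xj by simp
  qed
  have "inj g"
  proof (rule injI)
    fix i j assume ij: "g i = g j"
    have "c (g i) = c (g j)" using ij by simp
    moreover have "c (g i) = c \<gamma> - 2 * of_nat i" "c (g j) = c \<gamma> - 2 * of_nat j" using g by blast+
    ultimately have "(of_nat i :: 'k) = of_nat j" by simp
    thus "i = j" by simp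
  qed
  moreover have "finite (range g)" using inD fin\<Delta> finite_subset by blast
  ultimately have "finite (UNIV :: nat set)" using finite_imageD by blast
  thus False by simp
qed

lemma sl2: assumes v: "v \<in> Lroot sL Lg \<gamma>" and cv: "c \<gamma> = of_int n" and n: "n < 0" and nz: "v \<noteq> 0"
  shows "(br e ^^ nat (- n)) v \<noteq> 0"
proof
  assume z: "(br e ^^ nat (- n)) v = 0"
  obtain N where N: "(br f ^^ N) v = 0" using f_nil[OF v] by blast
  have "1 - int (nat (- n)) \<le> n" using Cl[rule_format, OF v cv nz N z] .
  thus False using n by simp
qed

end


lemma H: assumes \<alpha>: "\<alpha> \<in> \<Delta> - {0}" and x: "x \<in> Lg \<alpha> lam" "x \<noteq> 0"
  and y: "y \<in> Lroot sL Lg \<beta>" "y \<noteq> 0" and cb: "coroot sX (\<Delta> - {0}) \<alpha> \<beta> = of_int n" and n: "n < 0"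
  shows "(br x ^^ nat (- n)) y \<noteq> 0"
proof -
  have "Lg \<alpha> lam \<noteq> {0}" using x by blast
  then obtain e f where e: "e \<in> Lg \<alpha> lam" and f: "f \<in> Lg (- \<alpha>) (- lam)"
    and r: "Lg \<alpha> lam = range (\<lambda>c. sL c e)"
    and hz: "\<forall>b\<in>zspan \<Delta>. \<forall>x\<in>Lroot sL Lg b. br (br e f) x = sL (coroot sX (\<Delta> - {0}) \<alpha> b) x"
    using LT2all[rule_format, OF \<alpha> \<open>Lg \<alpha> lam \<noteq> {0}\<close>] by blast
  obtain s where s: "x = sL s e" using r x by blast
  have s0: "s \<noteq> 0" using s x by auto
  have pw: "(br (sL s e) ^^ m) y = sL (s ^ m) ((br e ^^ m) y)" for m
    by (induction m) (simp_all add: br_sc1 br_sc2 mult.commute)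
  have "(br e ^^ nat (- n)) y \<noteq> 0" using sl2[OF \<alpha> e f hz y(1) cb n y(2)] .
  thus ?thesis using s pw s0 by simp
qed


lemma cmp_br:
  assumes x: "x \<in> Lroot sL Lg \<alpha>" and z: "z \<in> Lroot sL Lg \<gamma>"
  shows "cmp (br x z) (\<alpha> + \<gamma>) \<nu> = (\<Sum>q\<in>{q \<in> {l. cmp x \<alpha> l \<noteq> 0} \<times> {l. cmp z \<gamma> l \<noteq> 0}. fst q + snd q = \<nu>}.
            br (cmp x \<alpha> (fst q)) (cmp z \<gamma> (snd q)))"
proof -
  define S where "S = {l. cmp x \<alpha> l \<noteq> 0}"
  define T where "T = {l. cmp z \<gamma> l \<noteq> 0}"
  have S: "finite S" and T: "finite T" using supp_fin S_def T_def by auto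
  define g where "g q = br (cmp x \<alpha> (fst q)) (cmp z \<gamma> (snd q))" for q
  define V where "V = (\<lambda>q. fst q + snd q) ` (S \<times> T)"
  define Q where "Q \<nu> = {q \<in> S \<times> T. fst q + snd q = \<nu>}" for \<nu>
  define d where "d (p :: 'x \<times> 'l) = (\<Sum>q\<in>Q (snd p). g q)" for p
  have xs: "x = (\<Sum>l\<in>S. cmp x \<alpha> l)" using Lroot_sum[OF x S] S_def by simp
  have zs: "z = (\<Sum>l\<in>T. cmp z \<gamma> l)" using Lroot_sum[OF z T] T_def by simp
  have "br x z = br (\<Sum>l\<in>S. cmp x \<alpha> l) (\<Sum>l\<in>T. cmp z \<gamma> l)"
    using arg_cong2[OF xs zs, of br] .
  also have "\<dots> = (\<Sum>l\<in>S. \<Sum>l'\<in>T. g (l, l'))" by (simp add: br_sum1 br_sum2 g_def) (rule sum.swap)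
  also have "\<dots> = (\<Sum>q\<in>S \<times> T. g q)" by (simp add: sum.cartesian_product)
  also have "\<dots> = (\<Sum>\<nu>\<in>V. \<Sum>q\<in>Q \<nu>. g q)" unfolding V_def Q_def
    by (rule sum.image_gen) (use S T in auto)
  also have "\<dots> = (\<Sum>p\<in>Pair (\<alpha> + \<gamma>) ` V. d p)"
    by (simp add: sum.reindex inj_on_def d_def)
  finally have bs: "br x z = (\<Sum>p\<in>Pair (\<alpha> + \<gamma>) ` V. d p)" .
  have fV: "finite (Pair (\<alpha> + \<gamma>) ` V)" using S T V_def by auto
  have dL: "d p \<in> Lg (fst p) (snd p)" if pV: "p \<in> Pair (\<alpha> + \<gamma>) ` V" for p
  proof -
    obtain \<nu> where p: "p = (\<alpha> + \<gamma>, \<nu>)" using pV by blast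
    have "g q \<in> Lg (\<alpha> + \<gamma>) \<nu>" if "q \<in> Q \<nu>" for q
      using br_grad[OF cmp_in[of x \<alpha> "fst q"] cmp_in[of z \<gamma> "snd q"]] that
      unfolding g_def Q_def by auto
    hence "d p \<in> Lg (\<alpha> + \<gamma>) \<nu>" unfolding d_def p snd_conv by (rule L.subspace_sum[OF subsp])
    thus ?thesis using p by simp
  qed
  have r: "cmp (br x z) (\<alpha> + \<gamma>) \<nu> = (if (\<alpha> + \<gamma>, \<nu>) \<in> Pair (\<alpha> + \<gamma>) ` V then d (\<alpha> + \<gamma>, \<nu>) else 0)"
    by (rule repr[OF fV dL bs])
  show ?thesis
  proof (cases "\<nu> \<in> V")
    case True thus ?thesis using r by (simp add: d_def Q_def g_def S_def T_def)
  next
    case False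
    hence "Q \<nu> = {}" unfolding Q_def V_def by (auto intro: rev_image_eqI)
    hence rhs: "{q \<in> {l. cmp x \<alpha> l \<noteq> 0} \<times> {l. cmp z \<gamma> l \<noteq> 0}. fst q + snd q = \<nu>} = {}"
      unfolding Q_def S_def T_def .
    have "(\<alpha> + \<gamma>, \<nu>) \<notin> Pair (\<alpha> + \<gamma>) ` V" using False by auto
    hence "cmp (br x z) (\<alpha> + \<gamma>) \<nu> = 0" using r by simp
    thus ?thesis by (simp only: rhs sum.empty)
  qed
qed

lemma lead_br:
  assumes x: "x \<in> Lroot sL Lg \<alpha>" and z: "z \<in> Lroot sL Lg \<gamma>"
    and tx: "\<forall>\<nu>. lt lam \<nu> \<longrightarrow> cmp x \<alpha> \<nu> = 0" and tz: "\<forall>\<nu>. lt mu \<nu> \<longrightarrow> cmp z \<gamma> \<nu> = 0"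
  shows "cmp (br x z) (\<alpha> + \<gamma>) (lam + mu) = br (cmp x \<alpha> lam) (cmp z \<gamma> mu)
     \<and> (\<forall>\<nu>. lt (lam + mu) \<nu> \<longrightarrow> cmp (br x z) (\<alpha> + \<gamma>) \<nu> = 0)"
proof -
  define S where "S = {l. cmp x \<alpha> l \<noteq> 0}"
  define T where "T = {l. cmp z \<gamma> l \<noteq> 0}"
  define g where "g q = br (cmp x \<alpha> (fst q)) (cmp z \<gamma> (snd q))" for q
  define Q where "Q \<nu> = {q \<in> S \<times> T. fst q + snd q = \<nu>}" for \<nu>
  have fQ: "finite (Q \<nu>)" for \<nu>
  proof -
    have "finite (S \<times> T)" using supp_fin S_def T_def by auto
    thus ?thesis unfolding Q_def by (rule finite_subset[rotated]) auto
  qed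
  have cf: "cmp (br x z) (\<alpha> + \<gamma>) \<nu> = (\<Sum>q\<in>Q \<nu>. g q)" for \<nu>
    using cmp_br[OF x z, of \<nu>] unfolding Q_def g_def S_def T_def .
  have leS: "lt l lam \<or> l = lam" if "l \<in> S" for l
    using that tx lt_total unfolding S_def by blast
  have leT: "lt l mu \<or> l = mu" if "l \<in> T" for l
    using that tz lt_total unfolding T_def by blast
  have q_le: "(lt (fst q + snd q) (lam + mu) \<or> fst q + snd q = lam + mu)
     \<and> (fst q + snd q = lam + mu \<longrightarrow> fst q = lam \<and> snd q = mu)" if "q \<in> S \<times> T" for q
  proof -
    have "fst q \<in> S" "snd q \<in> T" using that by auto
    from le_mono[OF leS[OF this(1)] leT[OF this(2)]] show ?thesis .
  qed
  have "Q (lam + mu) \<subseteq> {(lam, mu)}" using q_le unfolding Q_def by auto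
  hence "(\<Sum>q\<in>Q (lam + mu). g q) = (\<Sum>q\<in>{(lam, mu)}. g q)"
  proof (intro sum.mono_neutral_left)
    show "\<forall>i\<in>{(lam, mu)} - Q (lam + mu). g i = 0"
    proof
      fix i assume i: "i \<in> {(lam, mu)} - Q (lam + mu)"
      hence "i = (lam, mu)" "(lam, mu) \<notin> S \<times> T" unfolding Q_def by auto
      thus "g i = 0" unfolding g_def S_def T_def by auto
    qed
  qed auto
  hence first: "cmp (br x z) (\<alpha> + \<gamma>) (lam + mu) = br (cmp x \<alpha> lam) (cmp z \<gamma> mu)"
    using cf by (simp add: g_def)
  have "cmp (br x z) (\<alpha> + \<gamma>) \<nu> = 0" if "lt (lam + mu) \<nu>" for \<nu>
  proof -
    have "Q \<nu> = {}"
    proof (rule ccontr)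
      assume "Q \<nu> \<noteq> {}"
      then obtain q where q: "q \<in> S \<times> T" "fst q + snd q = \<nu>" unfolding Q_def by blast
      from q_le[OF q(1)] q(2) that show False using lt_trans lt_irrefl by metis
    qed
    thus ?thesis using cf by simp
  qed
  thus ?thesis using first by blast
qed


lemma iter:
  assumes x: "x \<in> Lroot sL Lg \<alpha>" and y: "y \<in> Lroot sL Lg \<beta>"
    and tx: "\<forall>\<nu>. lt lam \<nu> \<longrightarrow> cmp x \<alpha> \<nu> = 0" and ty: "\<forall>\<nu>. lt mu \<nu> \<longrightarrow> cmp y \<beta> \<nu> = 0"
  shows "\<exists>\<gamma>. (br x ^^ j) y \<in> Lroot sL Lg \<gamma>
     \<and> cmp ((br x ^^ j) y) \<gamma> (((+) lam ^^ j) mu) = (br (cmp x \<alpha> lam) ^^ j) (cmp y \<beta> mu)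
     \<and> (\<forall>\<nu>. lt (((+) lam ^^ j) mu) \<nu> \<longrightarrow> cmp ((br x ^^ j) y) \<gamma> \<nu> = 0)"
proof (induction j)
  case 0 thus ?case using y ty by auto
next
  case (Suc j)
  then obtain \<gamma> where g: "(br x ^^ j) y \<in> Lroot sL Lg \<gamma>"
     "cmp ((br x ^^ j) y) \<gamma> (((+) lam ^^ j) mu) = (br (cmp x \<alpha> lam) ^^ j) (cmp y \<beta> mu)"
     "\<forall>\<nu>. lt (((+) lam ^^ j) mu) \<nu> \<longrightarrow> cmp ((br x ^^ j) y) \<gamma> \<nu> = 0" by blast
  have L: "cmp (br x ((br x ^^ j) y)) (\<alpha> + \<gamma>) (lam + ((+) lam ^^ j) mu)
      = br (cmp x \<alpha> lam) (cmp ((br x ^^ j) y) \<gamma> (((+) lam ^^ j) mu))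
     \<and> (\<forall>\<nu>. lt (lam + ((+) lam ^^ j) mu) \<nu> \<longrightarrow> cmp (br x ((br x ^^ j) y)) (\<alpha> + \<gamma>) \<nu> = 0)"
    by (rule lead_br[OF x g(1) tx g(3)])
  have "(br x ^^ Suc j) y \<in> Lroot sL Lg (\<alpha> + \<gamma>)" using brL[OF x g(1)] by simp
  thus ?case using L g(2) by (intro exI[of _ "\<alpha> + \<gamma>"]) simp
qed

lemma top_ex:
  assumes x: "x \<in> Lroot sL Lg \<alpha>" and nz: "x \<noteq> 0"
  shows "\<exists>lam. cmp x \<alpha> lam \<noteq> 0 \<and> (\<forall>\<nu>. lt lam \<nu> \<longrightarrow> cmp x \<alpha> \<nu> = 0)"
proof -
  define S where "S = {l. cmp x \<alpha> l \<noteq> 0}"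
  have S: "finite S" using supp_fin S_def by simp
  have "S \<noteq> {}"
  proof
    assume "S = {}"
    hence "x = (\<Sum>l\<in>{}. cmp x \<alpha> l)" using Lroot_sum[OF x, of "{}"] S_def by simp
    thus False using nz by simp
  qed
  then obtain m where m: "m \<in> S" "\<forall>s\<in>S. \<not> lt m s" using fin_max[OF S] by blast
  thus ?thesis unfolding S_def by blast
qed

lemma main:
  assumes \<alpha>: "\<alpha> \<in> \<Delta> - {0}" and \<beta>: "\<beta> \<in> \<Delta> - {0}"
    and cb: "coroot sX (\<Delta> - {0}) \<alpha> \<beta> = of_int n" and n: "n < 0"
    and x: "x \<in> Lroot sL Lg \<alpha>" "x \<noteq> 0" and y: "y \<in> Lroot sL Lg \<beta>" "y \<noteq> 0"
  shows "(br x ^^ nat (- n)) y \<noteq> 0"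
proof -
  obtain lam where lam: "cmp x \<alpha> lam \<noteq> 0" "\<forall>\<nu>. lt lam \<nu> \<longrightarrow> cmp x \<alpha> \<nu> = 0"
    using top_ex[OF x] by blast
  obtain mu where mu: "cmp y \<beta> mu \<noteq> 0" "\<forall>\<nu>. lt mu \<nu> \<longrightarrow> cmp y \<beta> \<nu> = 0"
    using top_ex[OF y] by blast
  have hz: "(br (cmp x \<alpha> lam) ^^ nat (- n)) (cmp y \<beta> mu) \<noteq> 0"
    by (rule H[OF \<alpha> cmp_in lam(1) Lg_Lroot[OF cmp_in] mu(1) cb n])
  obtain \<gamma> where g: "cmp ((br x ^^ nat (- n)) y) \<gamma> (((+) lam ^^ nat (- n)) mu)
      = (br (cmp x \<alpha> lam) ^^ nat (- n)) (cmp y \<beta> mu)"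
    using iter[OF x(1) y(1) lam(2) mu(2), of "nat (- n)"] by blast
  show ?thesis
  proof
    assume "(br x ^^ nat (- n)) y = 0"
    thus False using g hz by simp
  qed
qed

end

theorem lemma3p5:
  fixes sX :: "'k::field_char_0 \<Rightarrow> 'x::ab_group_add \<Rightarrow> 'x"
    and sL :: "'k \<Rightarrow> 'L::ab_group_add \<Rightarrow> 'L"
    and br :: "'L \<Rightarrow> 'L \<Rightarrow> 'L"
    and \<Delta> :: "'x set"
    and Lg :: "'x \<Rightarrow> 'l::ab_group_add \<Rightarrow> 'L set"
    and n :: int
  assumes "lie_torus sX sL br \<Delta> Lg"
    and "\<alpha> \<in> \<Delta> - {0}" and "\<beta> \<in> \<Delta> - {0}"
    and "coroot sX (\<Delta> - {0}) \<alpha> \<beta> = of_int n" and "n < 0"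
    and "x\<alpha> \<in> Lroot sL Lg \<alpha>" and "x\<alpha> \<noteq> 0"
    and "y\<beta> \<in> Lroot sL Lg \<beta>" and "y\<beta> \<noteq> 0"
  shows "(br x\<alpha> ^^ nat (- n)) y\<beta> \<noteq> 0"
  by (rule LTc.main[OF LTc.intro[OF assms(1)] assms(2-9)])

end
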